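(* There exists a finite constant $C$ such that for any $k\ge0$, any vertex $v\in\mathbb T_k$ and any $0\le j\le k$, \[\mathbb E\big[(X_v(j)-Y_v(j))^6\big]\le Cj^3\quad\text{and}\quad\mathbb E\big[(X_v(j)+Y_v(j)-j)^6\big]\le Cj^3.\]
   Context: Let $R(x,y)=\frac{x+1}{y+1}\vee\frac{y+1}{x+1}$ and $P(x,y)=\frac{y+1}{2(x+1)}\mathbb 1_{x\ge y}+(1-\frac{x+1}{2(y+1)})\mathbb 1_{x<y}$. Let $\mathbb T$ be the infinite rooted binary tree with root $\rho$, $\mathbb T_n$ its $n$th generation, and write $v1,v2$ for the children of $v$. Attach to each vertex $v$ independent random variables $\mathcal U^{\rm split}_v,\mathcal U^{\rm dir}_v$ uniform on $(0,1)$ (and an independent Exp(1) variable $\mathbbm e_v$), independent over $v$. Set $B_\rho=H_\rho=1$. Recursively, let $D_v=1$ if $\mathcal U^{\rm dir}_v\le P(-\log B_v,-\log H_v)$ and $D_v=0$ otherwise; if $D_v=1$ set $B_{v1}=\mathcal U^{\rm split}_vB_v$, $B_{v2}=(1-\mathcal U^{\rm split}_v)B_v$, $H_{v1}=H_{v2}=H_v$; if $D_v=0$ set $H_{v1}=\mathcal U^{\rm split}_vH_v$, $H_{v2}=(1-\mathcal U^{\rm split}_v)H_v$, $B_{v1}=B_{v2}=B_v$. Let $X_v=-\log B_v$, $Y_v=-\log H_v$. For $v\in\mathbb T_k$ and $j\le k$, $X_v(j)$ and $Y_v(j)$ denote $X_u$ and $Y_u$ where $u$ is the unique ancestor of $v$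 in $\mathbb T_j$. *)

theory Defs
  imports "HOL-Probability.Probability"
begin

text \<open>Vertices of the infinite rooted binary tree are lists of booleans; the root is [],
  and the children v1, v2 of v are True # v and False # v (newest step at the head).
  The generation of v is length v; the ancestor of v in generation j is drop (length v - j) v.\<close>

definition Pfun :: "real \<Rightarrow> real \<Rightarrow> real" where
  "Pfun x y = (if x \<ge> y then (y + 1) / (2 * (x + 1)) else 1 - (x + 1) / (2 * (y + 1)))"

text \<open>Sample space: one uniform (0,1) variable for each pair (v, b);
  (v, True) is U^split_v and (v, False) is U^dir_v, all independent.\<close>

definition Omega :: "((bool list \<times> bool) \<Rightarrow> real) measure" where
  "Omega = PiM UNIV (\<lambda>_. uniform_measure lborel {0<..<1::real})"

definition Usplit :: "((bool list \<times> bool) \<Rightarrow> real) \<Rightarrow> bool list \<Rightarrow> real" where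
  "Usplit \<omega> v = \<omega> (v, True)"

definition Udir :: "((bool list \<times> bool) \<Rightarrow> real) \<Rightarrow> bool list \<Rightarrow> real" where
  "Udir \<omega> v = \<omega> (v, False)"

fun BH :: "((bool list \<times> bool) \<Rightarrow> real) \<Rightarrow> bool list \<Rightarrow> real \<times> real" where
  "BH \<omega> [] = (1, 1)"
| "BH \<omega> (c # v) =
     (let b = fst (BH \<omega> v); h = snd (BH \<omega> v); u = Usplit \<omega> v;
          d = (Udir \<omega> v \<le> Pfun (- ln b) (- ln h))
      in if d then ((if c then u * b else (1 - u) * b), h)
         else (b, (if c then u * h else (1 - u) * h)))"

definition Xv :: "((bool list \<times> bool) \<Rightarrow> real) \<Rightarrow> bool list \<Rightarrow> real" where
  "Xv \<omega> v = - ln (fst (BH \<omega> v))"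

definition Yv :: "((bool list \<times> bool) \<Rightarrow> real) \<Rightarrow> bool list \<Rightarrow> real" where
  "Yv \<omega> v = - ln (snd (BH \<omega> v))"

definition Xanc :: "((bool list \<times> bool) \<Rightarrow> real) \<Rightarrow> bool list \<Rightarrow> nat \<Rightarrow> real" where
  "Xanc \<omega> v j = Xv \<omega> (drop (length v - j) v)"

definition Yanc :: "((bool list \<times> bool) \<Rightarrow> real) \<Rightarrow> bool list \<Rightarrow> nat \<Rightarrow> real" where
  "Yanc \<omega> v j = Yv \<omega> (drop (length v - j) v)"

end

theory Submission
  imports Defs "HOL-Real_Asymp.Real_Asymp"
begin


abbreviation M0 :: "real measure" where "M0 \<equiv> uniform_measure lborel {0<..<1::real}"

lemma prob_M0: "prob_space M0"
  by (intro prob_space_uniform_measure) auto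

lemma prob_Omega: "prob_space Omega"
  unfolding Omega_def using prob_M0 by (intro prob_space_PiM) auto

lemma space_Omega: "space Omega = UNIV"
  unfolding Omega_def by (simp add: space_PiM)

lemma split_coord:
  fixes F :: "((bool list \<times> bool) \<Rightarrow> real) \<Rightarrow> real \<Rightarrow> ennreal"
  assumes meas[measurable]: "(\<lambda>(\<omega>,x). F \<omega> x) \<in> borel_measurable (Omega \<Otimes>\<^sub>M M0)"
    and indep: "\<And>\<omega> z. F (fun_upd \<omega> i z) = F \<omega>"
  shows "(\<integral>\<^sup>+\<omega>. F \<omega> (\<omega> i) \<partial>Omega) = (\<integral>\<^sup>+\<omega>. (\<integral>\<^sup>+x. F \<omega> x \<partial>M0) \<partial>Omega)"
proof -
  define I' where "I' = UNIV - {i}"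
  define P where "P = PiM I' (\<lambda>_. M0)"
  interpret M0: prob_space M0 by (rule prob_M0)
  interpret P: prob_space P unfolding P_def using prob_M0 by (intro prob_space_PiM) auto
  interpret pp: pair_prob_space M0 P ..
  have ins: "insert i I' = UNIV" unfolding I'_def by auto
  have D: "distr (M0 \<Otimes>\<^sub>M P) Omega (\<lambda>(x,X). X(i:=x)) = Omega"
    using distr_pair_PiM_eq_PiM[of I' "\<lambda>_. M0" i] prob_M0 unfolding ins P_def Omega_def by simp
  have phi[measurable]: "(\<lambda>(x,X). X(i:=x)) \<in> (M0 \<Otimes>\<^sub>M P) \<rightarrow>\<^sub>M Omega"
  proof -
    have "(\<lambda>p. (snd p)(i := fst p)) \<in> (M0 \<Otimes>\<^sub>M P) \<rightarrow>\<^sub>M Omega"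
      unfolding Omega_def P_def
      by (rule measurable_fun_upd[where J=I']) (auto simp: I'_def)
    then show ?thesis by (simp add: case_prod_beta')
  qed
  have m1[measurable]: "(\<lambda>\<omega>. F \<omega> (\<omega> i)) \<in> borel_measurable Omega"
  proof -
    have "(\<lambda>\<omega>. (\<omega>, \<omega> i)) \<in> Omega \<rightarrow>\<^sub>M Omega \<Otimes>\<^sub>M M0"
      unfolding Omega_def by measurable
    from measurable_compose[OF this meas] show ?thesis by simp
  qed
  have m2[measurable]: "(\<lambda>\<omega>. \<integral>\<^sup>+x. F \<omega> x \<partial>M0) \<in> borel_measurable Omega"
    by measurable
  have "(\<integral>\<^sup>+\<omega>. F \<omega> (\<omega> i) \<partial>Omega) = (\<integral>\<^sup>+p. F ((snd p)(i:=fst p)) (fst p) \<partial>(M0 \<Otimes>\<^sub>M P))"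
    apply (subst D[symmetric])
    apply (subst nn_integral_distr)
    apply (auto simp: case_prod_beta')
    done
  also have "\<dots> = (\<integral>\<^sup>+X. (\<integral>\<^sup>+x. F (X(i:=x)) x \<partial>M0) \<partial>P)"
    apply (subst pp.nn_integral_snd[symmetric])
    subgoal using measurable_compose[OF phi m1] by (simp add: case_prod_beta')
    apply simp
    done
  also have "\<dots> = (\<integral>\<^sup>+X. (\<integral>\<^sup>+y. (\<integral>\<^sup>+x. F (X(i:=y)) x \<partial>M0) \<partial>M0) \<partial>P)"
    by (simp add: indep M0.emeasure_space_1)
  also have "\<dots> = (\<integral>\<^sup>+p. (\<integral>\<^sup>+x. F ((snd p)(i:=fst p)) x \<partial>M0) \<partial>(M0 \<Otimes>\<^sub>M P))"
    apply (subst pp.nn_integral_snd[symmetric])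
    subgoal using measurable_compose[OF phi m2] by (simp add: case_prod_beta')
    apply simp
    done
  also have "\<dots> = (\<integral>\<^sup>+\<omega>. (\<integral>\<^sup>+x. F \<omega> x \<partial>M0) \<partial>Omega)"
    apply (subst D[symmetric])
    apply (subst nn_integral_distr)
    apply (auto simp: case_prod_beta')
    done
  finally show ?thesis .
qed


lemma comp_meas: "(\<lambda>\<omega>. \<omega> i) \<in> borel_measurable Omega"
proof -
  have "(\<lambda>\<omega>. \<omega> i) \<in> Omega \<rightarrow>\<^sub>M M0" unfolding Omega_def by measurable
  then show ?thesis by (simp cong: measurable_cong_sets)
qed

lemma Pfun_meas[measurable (raw)]:
  assumes [measurable]: "f \<in> borel_measurable M" "g \<in> borel_measurable M"
  shows "(\<lambda>x. Pfun (f x) (g x)) \<in> borel_measurable M"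
  unfolding Pfun_def by measurable

lemma Usplit_meas[measurable]: "(\<lambda>\<omega>. Usplit \<omega> v) \<in> borel_measurable Omega"
  unfolding Usplit_def by (rule comp_meas)

lemma Udir_meas[measurable]: "(\<lambda>\<omega>. Udir \<omega> v) \<in> borel_measurable Omega"
  unfolding Udir_def by (rule comp_meas)

lemma fst_BH_Cons: "fst (BH \<omega> (c # v)) = (if Udir \<omega> v \<le> Pfun (- ln (fst (BH \<omega> v))) (- ln (snd (BH \<omega> v)))
   then (if c then Usplit \<omega> v * fst (BH \<omega> v) else (1 - Usplit \<omega> v) * fst (BH \<omega> v)) else fst (BH \<omega> v))"
  by (simp add: Let_def)

lemma snd_BH_Cons: "snd (BH \<omega> (c # v)) = (if Udir \<omega> v \<le> Pfun (- ln (fst (BH \<omega> v))) (- ln (snd (BH \<omega> v)))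
   then snd (BH \<omega> v) else (if c then Usplit \<omega> v * snd (BH \<omega> v) else (1 - Usplit \<omega> v) * snd (BH \<omega> v)))"
  by (simp add: Let_def)

lemma BH_meas: "(\<lambda>\<omega>. fst (BH \<omega> v)) \<in> borel_measurable Omega \<and> (\<lambda>\<omega>. snd (BH \<omega> v)) \<in> borel_measurable Omega"
proof (induction v)
  case Nil then show ?case by simp
next
  case (Cons c v)
  then have [measurable]: "(\<lambda>\<omega>. fst (BH \<omega> v)) \<in> borel_measurable Omega" "(\<lambda>\<omega>. snd (BH \<omega> v)) \<in> borel_measurable Omega" by auto
  show ?case unfolding fst_BH_Cons snd_BH_Cons by measurable
qed

lemma Xv_meas[measurable]: "(\<lambda>\<omega>. Xv \<omega> v) \<in> borel_measurable Omega"
proof -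
  have [measurable]: "(\<lambda>\<omega>. fst (BH \<omega> v)) \<in> borel_measurable Omega" using BH_meas by auto
  show ?thesis unfolding Xv_def by measurable
qed

lemma Yv_meas[measurable]: "(\<lambda>\<omega>. Yv \<omega> v) \<in> borel_measurable Omega"
proof -
  have [measurable]: "(\<lambda>\<omega>. snd (BH \<omega> v)) \<in> borel_measurable Omega" using BH_meas by auto
  show ?thesis unfolding Yv_def by measurable
qed

lemma BH_upd: "length v \<le> length w \<Longrightarrow> BH (fun_upd \<omega> (w,b) z) v = BH \<omega> v"
proof (induction v)
  case Nil then show ?case by simp
next
  case (Cons c v)
  then have "(v, True) \<noteq> (w, b)" "(v, False) \<noteq> (w, b)" by auto
  with Cons show ?case by (simp add: Usplit_def Udir_def Let_def)
qed

definition good :: "((bool list \<times> bool) \<Rightarrow> real) \<Rightarrow> bool" where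
  "good \<omega> = (\<forall>i. 0 < \<omega> i \<and> \<omega> i < 1)"

lemma AE_good: "AE \<omega> in Omega. good \<omega>"
proof -
  have "AE \<omega> in Omega. \<forall>i. 0 < \<omega> i \<and> \<omega> i < 1"
  proof (rule AE_all_countable[THEN iffD2], intro allI)
    fix i
    have "AE x in M0. 0 < x \<and> x < 1"
      by (rule AE_uniform_measureI) auto
    then show "AE \<omega> in Omega. 0 < \<omega> i \<and> \<omega> i < 1"
      unfolding Omega_def using prob_M0 by (intro AE_PiM_component) auto
  qed
  then show ?thesis unfolding good_def .
qed

lemma good_BH: "good \<omega> \<Longrightarrow> 0 < fst (BH \<omega> v) \<and> fst (BH \<omega> v) \<le> 1 \<and> 0 < snd (BH \<omega> v) \<and> snd (BH \<omega> v) \<le> 1"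
proof (induction v)
  case Nil then show ?case by simp
next
  case (Cons c v)
  have u: "0 < Usplit \<omega> v" "Usplit \<omega> v < 1" using Cons.prems unfolding good_def Usplit_def by auto
  have p1: "0 < a * b \<and> a * b \<le> 1" if "0 < a" "a < 1" "0 < b" "b \<le> 1" for a b :: real
    using that by (auto simp: mult_le_one)
  have IH: "0 < fst (BH \<omega> v)" "fst (BH \<omega> v) \<le> 1" "0 < snd (BH \<omega> v)" "snd (BH \<omega> v) \<le> 1"
    using Cons by auto
  show ?case unfolding fst_BH_Cons snd_BH_Cons
    using p1[OF u IH(1,2)] p1[OF u IH(3,4)] p1[of "1 - Usplit \<omega> v", OF _ _ IH(1,2)] p1[of "1 - Usplit \<omega> v", OF _ _ IH(3,4)] u IH
    by auto
qed

lemma good_XY: "good \<omega> \<Longrightarrow> 0 \<le> Xv \<omega> v \<and> 0 \<le> Yv \<omega> v"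
  using good_BH[of \<omega> v] unfolding Xv_def Yv_def by auto

definition Ef :: "bool \<Rightarrow> real \<Rightarrow> real" where
  "Ef c u = - ln (if c then u else 1 - u)"

lemma XY_Cons: assumes g: "good \<omega>"
  shows "Xv \<omega> (c # v) = Xv \<omega> v + (if \<omega> (v,False) \<le> Pfun (Xv \<omega> v) (Yv \<omega> v) then Ef c (\<omega> (v,True)) else 0)"
    "Yv \<omega> (c # v) = Yv \<omega> v + (if \<omega> (v,False) \<le> Pfun (Xv \<omega> v) (Yv \<omega> v) then 0 else Ef c (\<omega> (v,True)))"
proof -
  have u: "0 < \<omega> (v,True)" "\<omega> (v,True) < 1" using g unfolding good_def by auto
  have b: "0 < fst (BH \<omega> v)" "0 < snd (BH \<omega> v)" using good_BH[OF g, of v] by auto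
  have u1: "0 < 1 - \<omega> (v,True)" using u by simp
  show "Xv \<omega> (c # v) = Xv \<omega> v + (if \<omega> (v,False) \<le> Pfun (Xv \<omega> v) (Yv \<omega> v) then Ef c (\<omega> (v,True)) else 0)"
    unfolding Xv_def Yv_def Ef_def fst_BH_Cons Usplit_def Udir_def
    using u u1 b by (cases c) (simp_all add: ln_mult)
  show "Yv \<omega> (c # v) = Yv \<omega> v + (if \<omega> (v,False) \<le> Pfun (Xv \<omega> v) (Yv \<omega> v) then 0 else Ef c (\<omega> (v,True)))"
    unfolding Xv_def Yv_def Ef_def snd_BH_Cons Usplit_def Udir_def
    using u u1 b by (cases c) (simp_all add: ln_mult)
qed

lemma step_int:
  fixes G :: "real \<Rightarrow> real \<Rightarrow> real \<Rightarrow> real \<Rightarrow> real"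
  assumes Gm0: "(\<lambda>p. G (fst p) (fst (snd p)) (fst (snd (snd p))) (snd (snd (snd p)))) \<in> borel_measurable (borel \<Otimes>\<^sub>M (borel \<Otimes>\<^sub>M (borel \<Otimes>\<^sub>M borel)))"
  shows "(\<integral>\<^sup>+\<omega>. ennreal (G (Xv \<omega> v) (Yv \<omega> v) (\<omega> (v,True)) (\<omega> (v,False))) \<partial>Omega)
    = (\<integral>\<^sup>+\<omega>. (\<integral>\<^sup>+a. (\<integral>\<^sup>+d. ennreal (G (Xv \<omega> v) (Yv \<omega> v) a d) \<partial>M0) \<partial>M0) \<partial>Omega)"
proof -
  interpret M0: prob_space M0 by (rule prob_M0)
  have c1[measurable]: "(\<lambda>x. fst x (v,True)) \<in> borel_measurable (Omega \<Otimes>\<^sub>M M0)"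
    by (rule measurable_compose[OF measurable_fst comp_meas])
  have c2[measurable]: "(\<lambda>x. snd x) \<in> borel_measurable (Omega \<Otimes>\<^sub>M M0)"
    using measurable_snd[of Omega M0] by (simp cong: measurable_cong_sets)
  have c3[measurable]: "(\<lambda>x. snd (fst x)) \<in> borel_measurable ((Omega \<Otimes>\<^sub>M M0) \<Otimes>\<^sub>M M0)"
    using measurable_compose[OF measurable_fst c2] by simp
  have c4[measurable]: "(\<lambda>x. snd x) \<in> borel_measurable ((Omega \<Otimes>\<^sub>M M0) \<Otimes>\<^sub>M M0)"
    using measurable_snd[of "Omega \<Otimes>\<^sub>M M0" M0] by (simp cong: measurable_cong_sets)
  have Gm: "(\<lambda>x. G (f x) (g x) (h x) (k x)) \<in> borel_measurable N"
    if [measurable]: "f \<in> borel_measurable N" "g \<in> borel_measurable N" "h \<in> borel_measurable N" "k \<in> borel_measurable N"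
    for N :: "'a measure" and f g h k
  proof -
    have "(\<lambda>x. (f x, g x, h x, k x)) \<in> N \<rightarrow>\<^sub>M (borel \<Otimes>\<^sub>M (borel \<Otimes>\<^sub>M (borel \<Otimes>\<^sub>M borel)))"
      by measurable
    from measurable_compose[OF this Gm0] show ?thesis by simp
  qed
  have XY_upd: "Xv (fun_upd \<omega> (v,b) z) v = Xv \<omega> v" "Yv (fun_upd \<omega> (v,b) z) v = Yv \<omega> v" for \<omega> b z
    by (simp_all add: Xv_def Yv_def BH_upd)
  have "(\<integral>\<^sup>+\<omega>. ennreal (G (Xv \<omega> v) (Yv \<omega> v) (\<omega> (v,True)) (\<omega> (v,False))) \<partial>Omega)
     = (\<integral>\<^sup>+\<omega>. (\<integral>\<^sup>+d. ennreal (G (Xv \<omega> v) (Yv \<omega> v) (\<omega> (v,True)) d) \<partial>M0) \<partial>Omega)"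
  proof (rule split_coord[where F="\<lambda>\<omega> d. ennreal (G (Xv \<omega> v) (Yv \<omega> v) (\<omega> (v,True)) d)"])
    show "(\<lambda>(\<omega>, d). ennreal (G (Xv \<omega> v) (Yv \<omega> v) (\<omega> (v, True)) d)) \<in> borel_measurable (Omega \<Otimes>\<^sub>M M0)"
      unfolding case_prod_beta' apply (rule measurable_compose[OF _ measurable_ennreal]) apply (rule Gm) 
      apply (rule measurable_compose[OF measurable_fst Xv_meas])
      apply (rule measurable_compose[OF measurable_fst Yv_meas])
      apply (rule c1)
      apply (rule c2)
      done
    show "(\<lambda>d. ennreal (G (Xv (fun_upd \<omega> (v, False) z) v) (Yv (fun_upd \<omega> (v, False) z) v) (fun_upd \<omega> (v, False) z (v, True)) d)) =
          (\<lambda>d. ennreal (G (Xv \<omega> v) (Yv \<omega> v) (\<omega> (v, True)) d))" for \<omega> z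
      by (simp add: XY_upd)
  qed
  also have "\<dots> = (\<integral>\<^sup>+\<omega>. (\<integral>\<^sup>+a. (\<integral>\<^sup>+d. ennreal (G (Xv \<omega> v) (Yv \<omega> v) a d) \<partial>M0) \<partial>M0) \<partial>Omega)"
  proof (rule split_coord[where F="\<lambda>\<omega> a. (\<integral>\<^sup>+d. ennreal (G (Xv \<omega> v) (Yv \<omega> v) a d) \<partial>M0)"])
    show "(\<lambda>(\<omega>, a). \<integral>\<^sup>+ d. ennreal (G (Xv \<omega> v) (Yv \<omega> v) a d) \<partial>M0) \<in> borel_measurable (Omega \<Otimes>\<^sub>M M0)"
      unfolding case_prod_beta'
      apply (rule M0.borel_measurable_nn_integral)
      unfolding case_prod_beta' apply (rule measurable_compose[OF _ measurable_ennreal]) apply (rule Gm) 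
      apply (rule measurable_compose[OF measurable_fst measurable_compose[OF measurable_fst Xv_meas]])
      apply (rule measurable_compose[OF measurable_fst measurable_compose[OF measurable_fst Yv_meas]])
      apply (rule c3)
      apply (rule c4)
      done
    show "(\<lambda>a. \<integral>\<^sup>+ d. ennreal (G (Xv (fun_upd \<omega> (v, True) z) v) (Yv (fun_upd \<omega> (v, True) z) v) a d) \<partial>M0) =
          (\<lambda>a. \<integral>\<^sup>+ d. ennreal (G (Xv \<omega> v) (Yv \<omega> v) a d) \<partial>M0)" for \<omega> z
      by (simp add: XY_upd)
  qed
  finally show ?thesis .
qed



lemma exp_ge_pow: fixes x :: real assumes "0 \<le> x" shows "x^k / fact k \<le> exp x"
proof -
  have s: "(\<lambda>n. x^n /\<^sub>R fact n) sums exp x" by (rule exp_converges)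
  have "sum (\<lambda>n. x^n /\<^sub>R fact n) {k} \<le> suminf (\<lambda>n. x^n /\<^sub>R fact n)"
    by (rule sum_le_suminf) (use s assms in \<open>auto simp: sums_summable\<close>)
  then show ?thesis using sums_unique[OF s] by (simp add: divide_inverse mult.commute)
qed

lemma ln_pow_bound: fixes a :: real assumes "0 < a" "a < 1"
  shows "(- ln a)^k \<le> 2^k * fact k / sqrt a"
proof -
  define t where "t = - ln a"
  have t0: "0 \<le> t" using assms unfolding t_def by simp
  have e: "exp (t/2) = 1 / sqrt a"
  proof -
    have "sqrt a = exp (ln a / 2)" using assms powr_half_sqrt[of a] by (simp add: powr_def)
    then show ?thesis unfolding t_def by (simp add: exp_minus[symmetric] field_simps exp_add[symmetric])
  qed
  have "(t/2)^k / fact k \<le> exp (t/2)" using t0 by (intro exp_ge_pow) simp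
  then have "(t/2)^k \<le> fact k / sqrt a" using e by (simp add: field_simps)
  then have "2^k * (t/2)^k \<le> 2^k * (fact k / sqrt a)" by (rule mult_left_mono) simp
  moreover have "2^k * (t/2)^k = t^k" by (simp add: power_divide)
  ultimately show ?thesis unfolding t_def by simp
qed

lemma nn_FTC01:
  fixes f F :: "real \<Rightarrow> real"
  assumes F: "\<And>x. 0 < x \<Longrightarrow> x < 1 \<Longrightarrow> DERIV F x :> f x"
  assumes f: "\<And>x. 0 < x \<Longrightarrow> x < 1 \<Longrightarrow> isCont f x"
  assumes nn: "\<And>x. 0 < x \<Longrightarrow> x < 1 \<Longrightarrow> 0 \<le> f x"
  assumes A: "(F \<longlongrightarrow> A) (at_right 0)"
  assumes B: "(F \<longlongrightarrow> B) (at_left 1)"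
  assumes fm: "f \<in> borel_measurable borel"
  shows "(\<integral>\<^sup>+x. ennreal (f x) * indicator {0<..<1} x \<partial>lborel) = ennreal (B - A)"
proof -
  have lt: "(0::ereal) < 1" by simp
  have A': "((F \<circ> real_of_ereal) \<longlongrightarrow> A) (at_right 0)"
    using A by (simp add: zero_ereal_def ereal_tendsto_simps)
  have B': "((F \<circ> real_of_ereal) \<longlongrightarrow> B) (at_left 1)"
    using B by (simp add: one_ereal_def ereal_tendsto_simps)
  have ei: "einterval 0 1 = {0<..<1::real}"
    by (simp add: zero_ereal_def one_ereal_def)
  note r = interval_integral_FTC_nonneg[OF lt, of F f A B]
  have c1: "\<And>x. 0 < ereal x \<Longrightarrow> ereal x < 1 \<Longrightarrow> DERIV F x :> f x" using F by (simp add: zero_ereal_def one_ereal_def)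
  have c2: "\<And>x. 0 < ereal x \<Longrightarrow> ereal x < 1 \<Longrightarrow> isCont f x" using f by (simp add: zero_ereal_def one_ereal_def)
  have c3: "AE x in lborel. 0 < ereal x \<longrightarrow> ereal x < 1 \<longrightarrow> 0 \<le> f x" using nn by (simp add: zero_ereal_def one_ereal_def)
  note r = r[OF c1 c2 c3 A' B']
  have int: "integrable lborel (\<lambda>x. indicator {0<..<1::real} x * f x)"
    using r(1) unfolding set_integrable_def ei by simp
  have val: "integral\<^sup>L lborel (\<lambda>x. indicator {0<..<1::real} x * f x) = B - A"
    using r(2) unfolding interval_lebesgue_integral_def set_lebesgue_integral_def ei by simp
  have "(\<integral>\<^sup>+x. ennreal (f x) * indicator {0<..<1} x \<partial>lborel) = (\<integral>\<^sup>+x. ennreal (indicator {0<..<1::real} x * f x) \<partial>lborel)"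
    by (intro nn_integral_cong) (auto split: split_indicator)
  also have "\<dots> = ennreal (B - A)"
    using nn by (subst nn_integral_eq_integral[OF int]) (auto split: split_indicator simp: val)
  finally show ?thesis .
qed

lemma int_inv_sqrt: "(\<integral>\<^sup>+x. ennreal (1 / sqrt x) * indicator {0<..<1} x \<partial>lborel) = 2"
proof -
  have "(\<integral>\<^sup>+x. ennreal (1 / sqrt x) * indicator {0<..<1} x \<partial>lborel) = ennreal (2 - 0)"
  proof (rule nn_FTC01[where F="\<lambda>x. 2 * sqrt x"])
    fix x :: real assume "0 < x" "x < 1"
    then show "((\<lambda>x. 2 * sqrt x) has_real_derivative 1 / sqrt x) (at x)"
      by (auto intro!: derivative_eq_intros simp: field_simps)
    show "isCont (\<lambda>x. 1 / sqrt x) x" using \<open>0 < x\<close> by (auto intro!: continuous_intros)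
    show "0 \<le> 1 / sqrt x" using \<open>0 < x\<close> by simp
  next
    show "((\<lambda>x. 2 * sqrt x) \<longlongrightarrow> 0) (at_right 0)" by real_asymp
    show "((\<lambda>x. 2 * sqrt x) \<longlongrightarrow> 2) (at_left 1)" by real_asymp
  qed measurable
  then show ?thesis by simp
qed

lemma lim_xlnx: "((\<lambda>x::real. x - x * ln x) \<longlongrightarrow> 0) (at_right 0)"
proof -
  have "((\<lambda>x::real. x * ln x) \<longlongrightarrow> 0) (at_right 0)" by real_asymp
  from tendsto_diff[OF tendsto_ident_at this] show ?thesis by simp
qed

lemma int_mln: "(\<integral>\<^sup>+x. ennreal (- ln x) * indicator {0<..<1} x \<partial>lborel) = 1"
proof -
  have "(\<integral>\<^sup>+x. ennreal (- ln x) * indicator {0<..<1} x \<partial>lborel) = ennreal (1 - 0)"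
  proof (rule nn_FTC01[where F="\<lambda>x. x - x * ln x"])
    fix x :: real assume "0 < x" "x < 1"
    then show "((\<lambda>x. x - x * ln x) has_real_derivative - ln x) (at x)"
      by (auto intro!: derivative_eq_intros simp: field_simps)
    show "isCont (\<lambda>x. - ln x) x" using \<open>0 < x\<close> by (auto intro!: continuous_intros)
    show "0 \<le> - ln x" using \<open>0 < x\<close> \<open>x < 1\<close> by simp
  next
    show "((\<lambda>x::real. x - x * ln x) \<longlongrightarrow> 0) (at_right 0)" by (rule lim_xlnx)
    show "((\<lambda>x::real. x - x * ln x) \<longlongrightarrow> 1) (at_left 1)" by real_asymp
  qed measurable
  then show ?thesis by simp
qed

lemma M0_nn: assumes [measurable]: "f \<in> borel_measurable borel"
  shows "(\<integral>\<^sup>+x. f x \<partial>M0) = (\<integral>\<^sup>+x. f x * indicator {0<..<1} x \<partial>lborel)"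
  by (subst nn_integral_uniform_measure) (auto simp: emeasure_lborel_Ioo divide_ennreal_def)

lemma Ef_meas[measurable]: "Ef c \<in> borel_measurable borel"
  unfolding Ef_def by measurable

lemma Ef_refl: assumes [measurable]: "f \<in> borel_measurable borel"
  shows "(\<integral>\<^sup>+a. f (Ef c a) \<partial>M0) = (\<integral>\<^sup>+a. f (- ln a) \<partial>M0)"
proof (cases c)
  case True then show ?thesis by (simp add: Ef_def)
next
  case False
  have "(\<integral>\<^sup>+a. f (- ln a) \<partial>M0) = (\<integral>\<^sup>+x. f (- ln x) * indicator {0<..<1} x \<partial>lborel)"
    by (rule M0_nn) measurable
  also have "\<dots> = ennreal \<bar>-1\<bar> * (\<integral>\<^sup>+x. f (- ln (1 + -1 * x)) * indicator {0<..<1} (1 + -1 * x) \<partial>lborel)"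
    by (rule nn_integral_real_affine[where c="-1" and t=1]) auto
  also have "\<dots> = (\<integral>\<^sup>+x. f (Ef c x) * indicator {0<..<1} x \<partial>lborel)"
    using False by (auto intro!: nn_integral_cong split: split_indicator simp: Ef_def)
  also have "\<dots> = (\<integral>\<^sup>+a. f (Ef c a) \<partial>M0)"
    by (rule M0_nn[symmetric]) measurable
  finally show ?thesis ..
qed

lemma Ef_mean: "(\<integral>\<^sup>+a. ennreal (Ef c a) \<partial>M0) = 1"
  by (subst Ef_refl[where f=ennreal]) (simp_all add: M0_nn int_mln)

lemma Ef_mom: "(\<integral>\<^sup>+a. ennreal (Ef c a ^ k) \<partial>M0) \<le> ennreal (2^(k+1) * fact k)"
proof -
  have "(\<integral>\<^sup>+a. ennreal (Ef c a ^ k) \<partial>M0) = (\<integral>\<^sup>+x. ennreal ((- ln x) ^ k) * indicator {0<..<1} x \<partial>lborel)"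
    by (subst Ef_refl[where f="\<lambda>t. ennreal (t ^ k)"]) (simp_all add: M0_nn)
  also have "\<dots> \<le> (\<integral>\<^sup>+x. ennreal (2^k * fact k) * (ennreal (1 / sqrt x) * indicator {0<..<1} x) \<partial>lborel)"
    apply (intro nn_integral_mono)
    subgoal for x
      using ln_pow_bound[of x k]
      by (auto split: split_indicator simp: ennreal_mult'[symmetric] divide_inverse)
    done
  also have "\<dots> = ennreal (2^k * fact k) * 2"
    by (subst nn_integral_cmult) (auto simp: int_inv_sqrt)
  also have "\<dots> = ennreal (2^k * fact k) * ennreal 2" by simp
  also have "\<dots> = ennreal (2^k * fact k * 2)" by (rule ennreal_mult'[symmetric]) simp
  also have "\<dots> = ennreal (2^(k+1) * fact k)" by (simp add: mult_ac)
  finally show ?thesis .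
qed




definition Qf :: "real \<Rightarrow> real" where "Qf e = 1 + e^2 + e^3 + e^4 + e^5 + e^6"

lemma h1: "\<bar>w::real\<bar> \<le> (1 + w^2) / 2"
proof -
  have "0 \<le> (\<bar>w\<bar> - 1)^2" by simp
  then show ?thesis by (simp add: power2_eq_square algebra_simps)
qed

lemma h2: "\<bar>w::real\<bar>^3 \<le> (w^2 + w^4) / 2"
proof -
  have "\<bar>w\<bar>^3 = \<bar>w\<bar> * w^2" by (simp add: power2_eq_square power3_eq_cube abs_mult_self)
  also have "\<dots> \<le> (1 + w^2)/2 * w^2" by (rule mult_right_mono[OF h1]) simp
  also have "\<dots> = (w^2 + w^4)/2" by (simp add: algebra_simps power2_eq_square power4_eq_xxxx)
  finally show ?thesis .
qed

lemma h3: fixes e :: real assumes "0 \<le> e" shows "\<bar>e - 1\<bar>^k \<le> 1 + e^k"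
proof (cases "e \<le> 1")
  case True
  then have "\<bar>e - 1\<bar>^k \<le> 1^k" using assms by (intro power_mono) auto
  moreover have "0 \<le> e^k" using assms by simp
  ultimately show ?thesis by simp
next
  case False
  then have "\<bar>e - 1\<bar>^k \<le> e^k" by (intro power_mono) auto
  then show ?thesis by simp
qed

lemma Qf_ge: assumes "0 \<le> e"
  shows "1 + e^2 \<le> Qf e" "1 + e^3 \<le> Qf e" "1 + e^4 \<le> Qf e" "1 + e^5 \<le> Qf e" "1 + e^6 \<le> Qf e" "0 \<le> Qf e" "1 \<le> Qf e"
proof -
  have "0 \<le> e^2" "0 \<le> e^3" "0 \<le> e^4" "0 \<le> e^5" "0 \<le> e^6" using assms by simp_all
  then show "1 + e^2 \<le> Qf e" "1 + e^3 \<le> Qf e" "1 + e^4 \<le> Qf e" "1 + e^5 \<le> Qf e" "1 + e^6 \<le> Qf e" "0 \<le> Qf e" "1 \<le> Qf e"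
    unfolding Qf_def by linarith+
qed

lemma habs: "\<bar>f\<bar>^k \<le> Qf e \<Longrightarrow> (f::real)^k \<le> Qf e"
proof -
  assume a: "\<bar>f\<bar>^k \<le> Qf e"
  have "f^k \<le> \<bar>f^k\<bar>" by (rule abs_ge_self)
  also have "\<dots> = \<bar>f\<bar>^k" by (rule power_abs)
  finally show ?thesis using a by linarith
qed


lemma prodb: fixes w f :: real
  assumes "\<bar>w\<bar>^m \<le> A" "\<bar>f\<bar>^k \<le> B"
  shows "w^m * f^k \<le> A * B"
proof -
  have "w^m * f^k \<le> \<bar>w^m * f^k\<bar>" by (rule abs_ge_self)
  also have "\<dots> = \<bar>w\<bar>^m * \<bar>f\<bar>^k" by (simp only: abs_mult power_abs)
  also have "\<dots> \<le> A * B"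
  proof (rule mult_mono)
    show "0 \<le> A" using assms(1) zero_le_power_abs[of w m] by linarith
  qed (use assms in auto)
  finally show ?thesis .
qed

lemma poly_S2: fixes w e :: real assumes e: "0 \<le> e"
  shows "(w + (e - 1))^2 \<le> w^2 + (2*w) * (e - 1) + 1 * Qf e"
proof -
  have "\<bar>e-1\<bar>^2 \<le> Qf e" using h3[OF e, of 2] Qf_ge(1)[OF e] by linarith
  then have f2: "(e-1)^2 \<le> Qf e" by (rule habs)
  have "(w + (e - 1))^2 = w^2 + 2*w*(e-1) + (e-1)^2" by (simp add: power2_eq_square algebra_simps)
  then show ?thesis using f2 by linarith
qed

lemma fb: fixes e :: real assumes e: "0 \<le> e"
  shows "\<bar>e - 1\<bar>^2 \<le> Qf e" "\<bar>e - 1\<bar>^3 \<le> Qf e" "\<bar>e - 1\<bar>^4 \<le> Qf e" "\<bar>e - 1\<bar>^5 \<le> Qf e" "\<bar>e - 1\<bar>^6 \<le> Qf e"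
  using h3[OF e, of 2] h3[OF e, of 3] h3[OF e, of 4] h3[OF e, of 5] h3[OF e, of 6] Qf_ge[OF e] by linarith+

lemma poly_S4: fixes w e :: real assumes e: "0 \<le> e"
  shows "(w + (e - 1))^4 \<le> w^4 + (4*w^3) * (e - 1) + (8 * w^2 + 3) * Qf e"
proof -
  define f where "f = e - 1"
  note b = fb[OF e, folded f_def]
  have q: "1 + e^3 \<le> Qf e" "0 \<le> Qf e" using Qf_ge[OF e] by auto
  have id: "(w + f)^4 = w^4 + 4*w^3*f + 6*w^2*f^2 + 4*w*f^3 + f^4"
    by (simp add: eval_nat_numeral algebra_simps)
  have t2: "w^2*f^2 \<le> w^2*Qf e"
    using habs[OF b(1)] by (intro mult_left_mono) auto
  have t3: "w^1*f^3 \<le> ((1 + w^2)/2) * Qf e"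
    using h1[of w] b(2) by (intro prodb) auto
  have t4: "f^4 \<le> Qf e" using habs[OF b(3)] .
  have e1: "((1 + w^2)/2) * Qf e = Qf e / 2 + w^2 * Qf e / 2" by (simp add: field_simps)
  have "(w + f)^4 \<le> w^4 + 4*w^3*f + (8 * w^2 + 3) * Qf e"
    using id t2 t3 t4 e1 q(2) by (simp add: distrib_right)
  then show ?thesis unfolding f_def by simp
qed

lemma poly_S6: fixes w e :: real assumes e: "0 \<le> e"
  shows "(w + (e - 1))^6 \<le> w^6 + (6*w^5) * (e - 1) + (25 * w^4 + 28 * w^2 + 4) * Qf e"
proof -
  define f where "f = e - 1"
  note b = fb[OF e, folded f_def]
  have q: "0 \<le> Qf e" using Qf_ge[OF e] by auto
  have id: "(w + f)^6 = w^6 + 6*w^5*f + 15*w^4*f^2 + 20*w^3*f^3 + 15*w^2*f^4 + 6*w*f^5 + f^6"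
    by (simp add: eval_nat_numeral algebra_simps)
  have t2: "w^4*f^2 \<le> w^4*Qf e"
    using habs[OF b(1)] by (intro mult_left_mono) auto
  have t3: "w^3*f^3 \<le> ((w^2 + w^4)/2) * Qf e"
    using h2[of w] b(2) by (intro prodb) auto
  have t4: "w^2*f^4 \<le> w^2*Qf e"
    using habs[OF b(3)] by (intro mult_left_mono) auto
  have t5: "w^1*f^5 \<le> ((1 + w^2)/2) * Qf e"
    using h1[of w] b(4) by (intro prodb) auto
  have t6: "f^6 \<le> Qf e" using habs[OF b(5)] .
  have e1: "((1 + w^2)/2) * Qf e = Qf e / 2 + w^2 * Qf e / 2" by (simp add: field_simps)
  have e2: "((w^2 + w^4)/2) * Qf e = w^2 * Qf e / 2 + w^4 * Qf e / 2" by (simp add: field_simps)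
  have "(w + f)^6 \<le> w^6 + 6*w^5*f + (25 * w^4 + 28 * w^2 + 4) * Qf e"
    using id t2 t3 t4 t5 t6 e1 e2 q by (simp add: distrib_right)
  then show ?thesis unfolding f_def by simp
qed

lemma poly_Z2: fixes z e :: real assumes e: "0 \<le> e"
  shows "((z + e)^2 + (z - e)^2) / 2 \<le> z^2 + 1 * Qf e"
proof -
  have "((z + e)^2 + (z - e)^2) / 2 = z^2 + e^2" by (simp add: power2_eq_square algebra_simps)
  then show ?thesis using Qf_ge[OF e] by simp
qed

lemma poly_Z4: fixes z e :: real assumes e: "0 \<le> e"
  shows "((z + e)^4 + (z - e)^4) / 2 \<le> z^4 + (6 * z^2 + 1) * Qf e"
proof -
  have id: "((z + e)^4 + (z - e)^4) / 2 = z^4 + 6*z^2*e^2 + e^4" by (simp add: eval_nat_numeral algebra_simps)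
  have "6*z^2*e^2 \<le> 6*z^2*Qf e" using Qf_ge[OF e] by (intro mult_left_mono) auto
  moreover have "e^4 \<le> Qf e" using Qf_ge[OF e] by auto
  ultimately show ?thesis unfolding id by (simp add: distrib_right)
qed

lemma poly_Z6: fixes z e :: real assumes e: "0 \<le> e"
  shows "((z + e)^6 + (z - e)^6) / 2 \<le> z^6 + (15 * z^4 + 15 * z^2 + 1) * Qf e"
proof -
  have id: "((z + e)^6 + (z - e)^6) / 2 = z^6 + 15*z^4*e^2 + 15*z^2*e^4 + e^6" by (simp add: eval_nat_numeral algebra_simps)
  have "15*z^4*e^2 \<le> 15*z^4*Qf e" using Qf_ge[OF e] by (intro mult_left_mono) auto
  moreover have "15*z^2*e^4 \<le> 15*z^2*Qf e" using Qf_ge[OF e] by (intro mult_left_mono) auto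
  moreover have "e^6 \<le> Qf e" using Qf_ge[OF e] by auto
  ultimately show ?thesis unfolding id by (simp add: distrib_right)
qed



lemma AE_Ef_pos: "AE a in M0. 0 < Ef c a"
proof -
  have "AE a in M0. 0 < a \<and> a < 1" by (rule AE_uniform_measureI) auto
  then show ?thesis by eventually_elim (auto simp: Ef_def)
qed

lemma Ef_mom_num: 
  "(\<integral>\<^sup>+a. ennreal (Ef c a ^ 2) \<partial>M0) \<le> 16"
  "(\<integral>\<^sup>+a. ennreal (Ef c a ^ 3) \<partial>M0) \<le> 96"
  "(\<integral>\<^sup>+a. ennreal (Ef c a ^ 4) \<partial>M0) \<le> 768"
  "(\<integral>\<^sup>+a. ennreal (Ef c a ^ 5) \<partial>M0) \<le> 7680"
  "(\<integral>\<^sup>+a. ennreal (Ef c a ^ 6) \<partial>M0) \<le> 92160"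
  using Ef_mom[of c 2] Ef_mom[of c 3] Ef_mom[of c 4] Ef_mom[of c 5] Ef_mom[of c 6]
  by (simp_all add: fact_numeral)

lemma Qf_meas[measurable]: "Qf \<in> borel_measurable borel"
  unfolding Qf_def by measurable

lemma Q_mom: "(\<integral>\<^sup>+a. ennreal (Qf (Ef c a)) \<partial>M0) \<le> 100721"
proof -
  interpret M0: prob_space M0 by (rule prob_M0)
  have "(\<integral>\<^sup>+a. ennreal (Qf (Ef c a)) \<partial>M0) = (\<integral>\<^sup>+a. 1 + ennreal (Ef c a ^ 2) + ennreal (Ef c a ^ 3) + ennreal (Ef c a ^ 4)
     + ennreal (Ef c a ^ 5) + ennreal (Ef c a ^ 6) \<partial>M0)"
    apply (rule nn_integral_cong_AE)
    using AE_Ef_pos[of c] apply eventually_elim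
    subgoal for a
    proof -
      assume "0 < Ef c a"
      then have p: "0 \<le> Ef c a ^ 2" "0 \<le> Ef c a ^ 3" "0 \<le> Ef c a ^ 4" "0 \<le> Ef c a ^ 5" "0 \<le> Ef c a ^ 6" by simp_all
      show ?thesis unfolding Qf_def using p by (simp add: ennreal_plus)
    qed
    done
  also have "\<dots> = 1 + (\<integral>\<^sup>+a. ennreal (Ef c a ^ 2) \<partial>M0) + (\<integral>\<^sup>+a. ennreal (Ef c a ^ 3) \<partial>M0) + (\<integral>\<^sup>+a. ennreal (Ef c a ^ 4) \<partial>M0)
     + (\<integral>\<^sup>+a. ennreal (Ef c a ^ 5) \<partial>M0) + (\<integral>\<^sup>+a. ennreal (Ef c a ^ 6) \<partial>M0)"
    by (simp add: nn_integral_add M0.emeasure_space_1)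
  also have "\<dots> \<le> 1 + 16 + 96 + 768 + 7680 + 92160"
    using Ef_mom_num[of c] by (intro add_mono) auto
  also have "\<dots> = (100721 :: ennreal)" by simp
  finally show ?thesis .
qed

lemma drift_gen:
  fixes T P :: "real \<Rightarrow> real"
  assumes [measurable]: "T \<in> borel_measurable borel" "P \<in> borel_measurable borel"
  assumes AE: "AE a in M0. 0 \<le> T a \<and> 0 \<le> P a \<and> T a \<le> P a + \<alpha> * (Ef c a - 1)"
  shows "(\<integral>\<^sup>+a. ennreal (T a) \<partial>M0) \<le> (\<integral>\<^sup>+a. ennreal (P a) \<partial>M0)"
proof -
  interpret M0: prob_space M0 by (rule prob_M0)
  have mean: "(\<integral>\<^sup>+a. ennreal (Ef c a) \<partial>M0) = 1" by (rule Ef_mean)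
  have AE2: "AE a in M0. 0 \<le> T a \<and> 0 \<le> P a \<and> T a \<le> P a + \<alpha> * (Ef c a - 1) \<and> 0 < Ef c a"
    using AE AE_Ef_pos[of c] by eventually_elim auto
  show ?thesis
  proof (cases "0 \<le> \<alpha>")
    case True
    have "(\<integral>\<^sup>+a. ennreal (T a) + ennreal \<alpha> \<partial>M0) \<le> (\<integral>\<^sup>+a. ennreal (P a) + ennreal \<alpha> * ennreal (Ef c a) \<partial>M0)"
      apply (rule nn_integral_mono_AE)
      using AE2 apply eventually_elim
      using True by (simp add: ennreal_plus[symmetric] ennreal_mult[symmetric] del: ennreal_plus) (simp add: algebra_simps)
    also have "\<dots> = (\<integral>\<^sup>+a. ennreal (P a) \<partial>M0) + ennreal \<alpha>"
      by (simp add: nn_integral_add nn_integral_cmult mean)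
    finally have "ennreal \<alpha> + (\<integral>\<^sup>+a. ennreal (T a) \<partial>M0) \<le> ennreal \<alpha> + (\<integral>\<^sup>+a. ennreal (P a) \<partial>M0)"
      by (simp add: nn_integral_add M0.emeasure_space_1 add.commute)
    then show ?thesis by (simp add: ennreal_add_left_cancel_le)
  next
    case False
    define \<beta> where "\<beta> = - \<alpha>"
    have b: "0 \<le> \<beta>" using False unfolding \<beta>_def by simp
    have "(\<integral>\<^sup>+a. ennreal (T a) + ennreal \<beta> * ennreal (Ef c a) \<partial>M0) \<le> (\<integral>\<^sup>+a. ennreal (P a) + ennreal \<beta> \<partial>M0)"
      apply (rule nn_integral_mono_AE)
      using AE2 apply eventually_elim
      using b by (simp add: ennreal_plus[symmetric] ennreal_mult[symmetric] del: ennreal_plus) (simp add: algebra_simps \<beta>_def)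
    then have "ennreal \<beta> + (\<integral>\<^sup>+a. ennreal (T a) \<partial>M0) \<le> ennreal \<beta> + (\<integral>\<^sup>+a. ennreal (P a) \<partial>M0)"
      by (simp add: nn_integral_add nn_integral_cmult mean M0.emeasure_space_1 add.commute)
    then show ?thesis by (simp add: ennreal_add_left_cancel_le)
  qed
qed

lemma gen_step:
  fixes T :: "real \<Rightarrow> real"
  assumes [measurable]: "T \<in> borel_measurable borel"
  assumes AE: "AE a in M0. 0 \<le> T a \<and> T a \<le> W + \<alpha> * (Ef c a - 1) + R * Qf (Ef c a)"
  assumes W: "0 \<le> W" and R: "0 \<le> R"
  shows "(\<integral>\<^sup>+a. ennreal (T a) \<partial>M0) \<le> ennreal (W + R * 100721)"
proof -
  interpret M0: prob_space M0 by (rule prob_M0)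
  have "(\<integral>\<^sup>+a. ennreal (T a) \<partial>M0) \<le> (\<integral>\<^sup>+a. ennreal (W + R * Qf (Ef c a)) \<partial>M0)"
  proof (rule drift_gen[where \<alpha>=\<alpha> and c=c])
    show "AE a in M0. 0 \<le> T a \<and> 0 \<le> W + R * Qf (Ef c a) \<and> T a \<le> W + R * Qf (Ef c a) + \<alpha> * (Ef c a - 1)"
      using AE AE_Ef_pos[of c] proof eventually_elim
      case (elim a)
      then have "0 \<le> Qf (Ef c a)" using Qf_ge[of "Ef c a"] by auto
      then show ?case using elim W R by auto
    qed
  qed measurable
  also have "\<dots> = (\<integral>\<^sup>+a. ennreal W + ennreal R * ennreal (Qf (Ef c a)) \<partial>M0)"
    apply (rule nn_integral_cong_AE)
    using AE_Ef_pos[of c] apply eventually_elim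
    subgoal for a using Qf_ge[of "Ef c a"] W R by (simp add: ennreal_plus[symmetric] ennreal_mult[symmetric] del: ennreal_plus)
    done
  also have "\<dots> = ennreal W + ennreal R * (\<integral>\<^sup>+a. ennreal (Qf (Ef c a)) \<partial>M0)"
    by (simp add: nn_integral_add nn_integral_cmult M0.emeasure_space_1)
  also have "\<dots> \<le> ennreal W + ennreal R * 100721"
    using Q_mom[of c] by (intro add_mono mult_left_mono) auto
  also have "\<dots> = ennreal (W + R * 100721)"
  proof -
    have "ennreal (R * 100721) = ennreal R * ennreal 100721" using R by (rule ennreal_mult')
    then have "ennreal (R * 100721) = ennreal R * 100721" by simp
    moreover have "ennreal (W + R * 100721) = ennreal W + ennreal (R * 100721)" using W R by (intro ennreal_plus) auto
    ultimately show ?thesis by simp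
  qed
  finally show ?thesis .
qed



lemma even_pow_nonneg: "0 \<le> (t::real)^(2*k)"
  by (simp add: power_mult)

lemma even_pow_mono: fixes z e :: real assumes "0 \<le> z" "0 \<le> e"
  shows "(z - e)^(2*k) \<le> (z + e)^(2*k)"
proof -
  have "(z - e)^2 \<le> (z + e)^2" using assms by (simp add: power2_eq_square algebra_simps)
  then have "((z - e)^2)^k \<le> ((z + e)^2)^k" by (rule power_mono) simp
  then show ?thesis by (simp add: power_mult)
qed

lemma neg_even: "(- t::real)^(2*k) = t^(2*k)"
  by (simp add: power_mult)

lemma M0_half: "measure M0 {..1/2} = 1/2"
proof -
  have "{0<..<1::real} \<inter> {..1/2} = {0<..1/2}" by auto
  then show ?thesis by (simp add: measure_uniform_measure)
qed

lemma Pfun_le: "0 \<le> x \<Longrightarrow> 0 \<le> y \<Longrightarrow> y < x \<Longrightarrow> Pfun x y \<le> 1/2"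
  unfolding Pfun_def by (auto simp: field_simps)

lemma Pfun_ge: "0 \<le> x \<Longrightarrow> 0 \<le> y \<Longrightarrow> x < y \<Longrightarrow> 1/2 \<le> Pfun x y"
  unfolding Pfun_def by (auto simp: field_simps)

lemma d_int:
  fixes x y e :: real and k :: nat
  assumes x: "0 \<le> x" and y: "0 \<le> y" and e: "0 \<le> e"
  shows "(\<integral>\<^sup>+d. ennreal ((x - y + (if d \<le> Pfun x y then e else -e))^(2*k)) \<partial>M0)
    \<le> ennreal (((x - y + e)^(2*k) + (x - y - e)^(2*k)) / 2)"
proof -
  interpret M0: prob_space M0 by (rule prob_M0)
  define z where "z = x - y"
  define A where "A = (z + e)^(2*k)"
  define B where "B = (z - e)^(2*k)"
  define p where "p = Pfun x y"
  define q where "q = measure M0 {..p}"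
  have A0: "0 \<le> A" and B0: "0 \<le> B" unfolding A_def B_def by (rule even_pow_nonneg)+
  have q01: "0 \<le> q" "q \<le> 1" unfolding q_def by (rule measure_nonneg, rule M0.prob_le_1)
  have em1: "emeasure M0 {..p} = ennreal q" unfolding q_def by (simp add: M0.emeasure_eq_measure)
  have "measure M0 {p<..} = measure M0 (space M0 - {..p})" by (simp add: Compl_eq_Diff_UNIV[symmetric] )
  also have "\<dots> = 1 - q" unfolding q_def by (rule M0.prob_compl) simp
  finally have em2: "emeasure M0 {p<..} = ennreal (1 - q)" by (simp add: M0.emeasure_eq_measure)
  have "(\<integral>\<^sup>+d. ennreal ((x - y + (if d \<le> Pfun x y then e else -e))^(2*k)) \<partial>M0)
     = (\<integral>\<^sup>+d. ennreal A * indicator {..p} d + ennreal B * indicator {p<..} d \<partial>M0)"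
    by (intro nn_integral_cong) (auto simp: A_def B_def z_def p_def split: split_indicator)
  also have "\<dots> = ennreal A * emeasure M0 {..p} + ennreal B * emeasure M0 {p<..}"
    by (simp add: nn_integral_add nn_integral_cmult_indicator)
  also have "\<dots> = ennreal (A * q + B * (1 - q))"
    using A0 B0 q01 by (simp add: em1 em2 ennreal_mult'[symmetric] ennreal_plus[symmetric] del: ennreal_plus)
  also have "\<dots> \<le> ennreal ((A + B) / 2)"
  proof (rule ennreal_leI)
    have key: "(q - 1/2) * (A - B) \<le> 0"
    proof (cases "0 < z")
      case True
      then have "p \<le> 1/2" unfolding p_def z_def using Pfun_le[OF x y] by auto
      then have "q \<le> measure M0 {..1/2}" unfolding q_def by (intro M0.finite_measure_mono) auto
      then have "q - 1/2 \<le> 0" using M0_half by simp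
      moreover have "0 \<le> A - B" unfolding A_def B_def using even_pow_mono[of z e k] True e by simp
      ultimately show ?thesis by (rule mult_nonpos_nonneg)
    next
      case False
      show ?thesis
      proof (cases "z = 0")
        case True then show ?thesis unfolding A_def B_def by (simp add: power_mult)
      next
        case False
        with \<open>\<not> 0 < z\<close> have "z < 0" by simp
        then have "1/2 \<le> p" unfolding p_def z_def using Pfun_ge[OF x y] by auto
        then have "measure M0 {..1/2} \<le> q" unfolding q_def by (intro M0.finite_measure_mono) auto
        then have "0 \<le> q - 1/2" using M0_half by simp
        moreover have "A - B \<le> 0"
        proof -
          have "(-z - e)^(2*k) \<le> (-z + e)^(2*k)" using even_pow_mono[of "-z" e k] \<open>z < 0\<close> e by simp
          moreover have "(-z - e)^(2*k) = A"
          proof -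
            have "-z - e = -(z + e)" by simp
            then show ?thesis unfolding A_def by (simp only: neg_even)
          qed
          moreover have "(-z + e)^(2*k) = B"
          proof -
            have "-z + e = -(z - e)" by simp
            then show ?thesis unfolding B_def by (simp only: neg_even)
          qed
          ultimately show ?thesis by simp
        qed
        ultimately show ?thesis by (rule mult_nonneg_nonpos)
      qed
    qed
    have "(q - 1/2) * (A - B) = A * q + B * (1 - q) - (A + B) / 2" by (simp add: field_simps)
    then show "A * q + B * (1 - q) \<le> (A + B) / 2" using key by linarith
  qed
  finally show ?thesis unfolding A_def B_def z_def .
qed



lemma omega_step:
  fixes G :: "real \<Rightarrow> real \<Rightarrow> real \<Rightarrow> real \<Rightarrow> real" and F' :: "((bool list \<times> bool) \<Rightarrow> real) \<Rightarrow> real"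
    and B :: "((bool list \<times> bool) \<Rightarrow> real) \<Rightarrow> ennreal"
  assumes Gm0: "(\<lambda>p. G (fst p) (fst (snd p)) (fst (snd (snd p))) (snd (snd (snd p)))) \<in> borel_measurable (borel \<Otimes>\<^sub>M (borel \<Otimes>\<^sub>M (borel \<Otimes>\<^sub>M borel)))"
  assumes eq: "\<And>\<omega>. good \<omega> \<Longrightarrow> F' \<omega> = G (Xv \<omega> v) (Yv \<omega> v) (\<omega> (v,True)) (\<omega> (v,False))"
  assumes inner: "\<And>\<omega>. good \<omega> \<Longrightarrow> (\<integral>\<^sup>+a. (\<integral>\<^sup>+d. ennreal (G (Xv \<omega> v) (Yv \<omega> v) a d) \<partial>M0) \<partial>M0) \<le> B \<omega>"
  shows "(\<integral>\<^sup>+\<omega>. ennreal (F' \<omega>) \<partial>Omega) \<le> (\<integral>\<^sup>+\<omega>. B \<omega> \<partial>Omega)"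
proof -
  have "(\<integral>\<^sup>+\<omega>. ennreal (F' \<omega>) \<partial>Omega) = (\<integral>\<^sup>+\<omega>. ennreal (G (Xv \<omega> v) (Yv \<omega> v) (\<omega> (v,True)) (\<omega> (v,False))) \<partial>Omega)"
    by (rule nn_integral_cong_AE) (use AE_good in \<open>eventually_elim, simp add: eq\<close>)
  also have "\<dots> = (\<integral>\<^sup>+\<omega>. (\<integral>\<^sup>+a. (\<integral>\<^sup>+d. ennreal (G (Xv \<omega> v) (Yv \<omega> v) a d) \<partial>M0) \<partial>M0) \<partial>Omega)"
    by (rule step_int[OF Gm0])
  also have "\<dots> \<le> (\<integral>\<^sup>+\<omega>. B \<omega> \<partial>Omega)"
    by (rule nn_integral_mono_AE) (use AE_good in \<open>eventually_elim, simp add: inner\<close>)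
  finally show ?thesis .
qed

definition Zq :: "((bool list \<times> bool) \<Rightarrow> real) \<Rightarrow> bool list \<Rightarrow> real" where
  "Zq \<omega> v = Xv \<omega> v - Yv \<omega> v"

definition Sq :: "((bool list \<times> bool) \<Rightarrow> real) \<Rightarrow> bool list \<Rightarrow> real" where
  "Sq \<omega> v = Xv \<omega> v + Yv \<omega> v - real (length v)"

lemma Z_step:
  fixes R :: "real \<Rightarrow> real" and k :: nat
  assumes R0: "\<And>z. 0 \<le> R z"
  assumes PZ: "\<And>z e. 0 \<le> e \<Longrightarrow> ((z + e)^(2*k) + (z - e)^(2*k)) / 2 \<le> z^(2*k) + R z * Qf e"
  shows "(\<integral>\<^sup>+\<omega>. ennreal ((Zq \<omega> (c # v))^(2*k)) \<partial>Omega) \<le> (\<integral>\<^sup>+\<omega>. ennreal ((Zq \<omega> v)^(2*k) + R (Zq \<omega> v) * 100721) \<partial>Omega)"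
proof (rule omega_step[where G="\<lambda>x y a d. (x - y + (if d \<le> Pfun x y then Ef c a else - Ef c a))^(2*k)"])
  show "(\<lambda>p. (fst p - fst (snd p) + (if snd (snd (snd p)) \<le> Pfun (fst p) (fst (snd p)) then Ef c (fst (snd (snd p))) else - Ef c (fst (snd (snd p)))))^(2*k))
     \<in> borel_measurable (borel \<Otimes>\<^sub>M (borel \<Otimes>\<^sub>M (borel \<Otimes>\<^sub>M borel)))"
    by measurable
  fix \<omega> assume g: "good \<omega>"
  show "(Zq \<omega> (c # v))^(2*k) = (Xv \<omega> v - Yv \<omega> v + (if \<omega> (v, False) \<le> Pfun (Xv \<omega> v) (Yv \<omega> v) then Ef c (\<omega> (v, True)) else - Ef c (\<omega> (v, True))))^(2*k)"
    unfolding Zq_def XY_Cons[OF g] by (auto simp: algebra_simps)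
  have xy: "0 \<le> Xv \<omega> v" "0 \<le> Yv \<omega> v" using good_XY[OF g] by auto
  define z where "z = Xv \<omega> v - Yv \<omega> v"
  have "(\<integral>\<^sup>+a. (\<integral>\<^sup>+d. ennreal ((Xv \<omega> v - Yv \<omega> v + (if d \<le> Pfun (Xv \<omega> v) (Yv \<omega> v) then Ef c a else - Ef c a))^(2*k)) \<partial>M0) \<partial>M0)
     \<le> (\<integral>\<^sup>+a. ennreal (((z + Ef c a)^(2*k) + (z - Ef c a)^(2*k)) / 2) \<partial>M0)"
    apply (rule nn_integral_mono_AE)
    using AE_Ef_pos[of c] apply eventually_elim
    unfolding z_def using xy by (intro d_int) auto
  also have "\<dots> \<le> ennreal (z^(2*k) + R z * 100721)"
  proof (rule gen_step[where \<alpha>=0 and c=c])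
    show "AE a in M0. 0 \<le> ((z + Ef c a)^(2*k) + (z - Ef c a)^(2*k)) / 2 \<and>
       ((z + Ef c a)^(2*k) + (z - Ef c a)^(2*k)) / 2 \<le> z^(2*k) + 0 * (Ef c a - 1) + R z * Qf (Ef c a)"
      using AE_Ef_pos[of c] proof eventually_elim
      case (elim a)
      then show ?case using PZ[of "Ef c a" z] even_pow_nonneg[of "z + Ef c a" k] even_pow_nonneg[of "z - Ef c a" k] by auto
    qed
  qed (auto simp: R0 even_pow_nonneg)
  finally show "(\<integral>\<^sup>+a. (\<integral>\<^sup>+d. ennreal ((Xv \<omega> v - Yv \<omega> v + (if d \<le> Pfun (Xv \<omega> v) (Yv \<omega> v) then Ef c a else - Ef c a))^(2*k)) \<partial>M0) \<partial>M0)
     \<le> ennreal ((Zq \<omega> v)^(2*k) + R (Zq \<omega> v) * 100721)" unfolding z_def Zq_def .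
qed

lemma S_step:
  fixes R A :: "real \<Rightarrow> real" and k :: nat
  assumes R0: "\<And>z. 0 \<le> R z"
  assumes PS: "\<And>w e. 0 \<le> e \<Longrightarrow> (w + (e - 1))^(2*k) \<le> w^(2*k) + A w * (e - 1) + R w * Qf e"
  shows "(\<integral>\<^sup>+\<omega>. ennreal ((Sq \<omega> (c # v))^(2*k)) \<partial>Omega) \<le> (\<integral>\<^sup>+\<omega>. ennreal ((Sq \<omega> v)^(2*k) + R (Sq \<omega> v) * 100721) \<partial>Omega)"
proof (rule omega_step[where G="\<lambda>x y a d. (x + y - real (length v) + (Ef c a - 1))^(2*k)"])
  show "(\<lambda>p. (fst p + fst (snd p) - real (length v) + (Ef c (fst (snd (snd p))) - 1))^(2*k))
     \<in> borel_measurable (borel \<Otimes>\<^sub>M (borel \<Otimes>\<^sub>M (borel \<Otimes>\<^sub>M borel)))"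
    by measurable
  fix \<omega> assume g: "good \<omega>"
  show "(Sq \<omega> (c # v))^(2*k) = (Xv \<omega> v + Yv \<omega> v - real (length v) + (Ef c (\<omega> (v, True)) - 1))^(2*k)"
    unfolding Sq_def XY_Cons[OF g] by (auto simp: algebra_simps)
  interpret M0: prob_space M0 by (rule prob_M0)
  define w where "w = Xv \<omega> v + Yv \<omega> v - real (length v)"
  have "(\<integral>\<^sup>+a. (\<integral>\<^sup>+d. ennreal ((Xv \<omega> v + Yv \<omega> v - real (length v) + (Ef c a - 1))^(2*k)) \<partial>M0) \<partial>M0)
     = (\<integral>\<^sup>+a. ennreal ((w + (Ef c a - 1))^(2*k)) \<partial>M0)"
    by (simp add: M0.emeasure_space_1 w_def)
  also have "\<dots> \<le> ennreal (w^(2*k) + R w * 100721)"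
  proof (rule gen_step[where \<alpha>="A w" and c=c])
    show "AE a in M0. 0 \<le> (w + (Ef c a - 1))^(2*k) \<and>
       (w + (Ef c a - 1))^(2*k) \<le> w^(2*k) + A w * (Ef c a - 1) + R w * Qf (Ef c a)"
      using AE_Ef_pos[of c] proof eventually_elim
      case (elim a)
      then show ?case using PS[of "Ef c a" w] even_pow_nonneg[of "w + (Ef c a - 1)" k] by auto
    qed
  qed (auto simp: R0 even_pow_nonneg)
  finally show "(\<integral>\<^sup>+a. (\<integral>\<^sup>+d. ennreal ((Xv \<omega> v + Yv \<omega> v - real (length v) + (Ef c a - 1))^(2*k)) \<partial>M0) \<partial>M0)
     \<le> ennreal ((Sq \<omega> v)^(2*k) + R (Sq \<omega> v) * 100721)" unfolding w_def Sq_def .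
qed



definition KK :: real where "KK = 3000000"

lemma Zq_meas[measurable]: "(\<lambda>\<omega>. Zq \<omega> v) \<in> borel_measurable Omega"
  unfolding Zq_def by measurable

lemma Sq_meas[measurable]: "(\<lambda>\<omega>. Sq \<omega> v) \<in> borel_measurable Omega"
  unfolding Sq_def by measurable

lemma split_int:
  fixes f :: "((bool list \<times> bool) \<Rightarrow> real) \<Rightarrow> real"
  assumes [measurable]: "f \<in> borel_measurable Omega"
  shows "(\<integral>\<^sup>+\<omega>. ennreal (f \<omega>^2 + KK) \<partial>Omega) = (\<integral>\<^sup>+\<omega>. ennreal (f \<omega>^2) \<partial>Omega) + ennreal KK"
    "(\<integral>\<^sup>+\<omega>. ennreal (f \<omega>^4 + KK * f \<omega>^2 + KK) \<partial>Omega) = (\<integral>\<^sup>+\<omega>. ennreal (f \<omega>^4) \<partial>Omega) + ennreal KK * (\<integral>\<^sup>+\<omega>. ennreal (f \<omega>^2) \<partial>Omega) + ennreal KK"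
    "(\<integral>\<^sup>+\<omega>. ennreal (f \<omega>^6 + KK * f \<omega>^4 + KK * f \<omega>^2 + KK) \<partial>Omega) = (\<integral>\<^sup>+\<omega>. ennreal (f \<omega>^6) \<partial>Omega) + ennreal KK * (\<integral>\<^sup>+\<omega>. ennreal (f \<omega>^4) \<partial>Omega) + ennreal KK * (\<integral>\<^sup>+\<omega>. ennreal (f \<omega>^2) \<partial>Omega) + ennreal KK"
proof -
  interpret O: prob_space Omega by (rule prob_Omega)
  have K: "0 \<le> KK" by (simp add: KK_def)
  have e2: "0 \<le> f \<omega>^2" "0 \<le> f \<omega>^4" "0 \<le> f \<omega>^6" for \<omega>
    by (simp_all add: even_pow_nonneg[of _ 1, simplified] even_pow_nonneg[of _ 2, simplified] even_pow_nonneg[of _ 3, simplified])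
  have p1: "ennreal (f \<omega>^2 + KK) = ennreal (f \<omega>^2) + ennreal KK" for \<omega>
    using e2 K by (simp add: ennreal_plus)
  have p2: "ennreal (f \<omega>^4 + KK * f \<omega>^2 + KK) = ennreal (f \<omega>^4) + ennreal KK * ennreal (f \<omega>^2) + ennreal KK" for \<omega>
    using e2[of \<omega>] K by (simp add: ennreal_plus ennreal_mult')
  have p3: "ennreal (f \<omega>^6 + KK * f \<omega>^4 + KK * f \<omega>^2 + KK) = ennreal (f \<omega>^6) + ennreal KK * ennreal (f \<omega>^4) + ennreal KK * ennreal (f \<omega>^2) + ennreal KK" for \<omega>
    using e2[of \<omega>] K by (simp add: ennreal_plus ennreal_mult')
  show "(\<integral>\<^sup>+\<omega>. ennreal (f \<omega>^2 + KK) \<partial>Omega) = (\<integral>\<^sup>+\<omega>. ennreal (f \<omega>^2) \<partial>Omega) + ennreal KK"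
    unfolding p1 by (simp add: nn_integral_add O.emeasure_space_1)
  show "(\<integral>\<^sup>+\<omega>. ennreal (f \<omega>^4 + KK * f \<omega>^2 + KK) \<partial>Omega) = (\<integral>\<^sup>+\<omega>. ennreal (f \<omega>^4) \<partial>Omega) + ennreal KK * (\<integral>\<^sup>+\<omega>. ennreal (f \<omega>^2) \<partial>Omega) + ennreal KK"
    unfolding p2 by (simp add: nn_integral_add nn_integral_cmult O.emeasure_space_1)
  show "(\<integral>\<^sup>+\<omega>. ennreal (f \<omega>^6 + KK * f \<omega>^4 + KK * f \<omega>^2 + KK) \<partial>Omega) = (\<integral>\<^sup>+\<omega>. ennreal (f \<omega>^6) \<partial>Omega) + ennreal KK * (\<integral>\<^sup>+\<omega>. ennreal (f \<omega>^4) \<partial>Omega) + ennreal KK * (\<integral>\<^sup>+\<omega>. ennreal (f \<omega>^2) \<partial>Omega) + ennreal KK"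
    unfolding p3 by (simp add: nn_integral_add nn_integral_cmult O.emeasure_space_1)
qed

lemma bnd:
  fixes t :: real
  shows "t^2 + 1 * 100721 \<le> t^2 + KK"
    "t^4 + (6 * t^2 + 1) * 100721 \<le> t^4 + KK * t^2 + KK"
    "t^4 + (8 * t^2 + 3) * 100721 \<le> t^4 + KK * t^2 + KK"
    "t^6 + (15 * t^4 + 15 * t^2 + 1) * 100721 \<le> t^6 + KK * t^4 + KK * t^2 + KK"
    "t^6 + (25 * t^4 + 28 * t^2 + 4) * 100721 \<le> t^6 + KK * t^4 + KK * t^2 + KK"
proof -
  have a: "0 \<le> t^2" "0 \<le> t^4" by (simp_all add: even_pow_nonneg[of _ 2, simplified])
  show "t^2 + 1 * 100721 \<le> t^2 + KK"
    "t^4 + (6 * t^2 + 1) * 100721 \<le> t^4 + KK * t^2 + KK"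
    "t^4 + (8 * t^2 + 3) * 100721 \<le> t^4 + KK * t^2 + KK"
    "t^6 + (15 * t^4 + 15 * t^2 + 1) * 100721 \<le> t^6 + KK * t^4 + KK * t^2 + KK"
    "t^6 + (25 * t^4 + 28 * t^2 + 4) * 100721 \<le> t^6 + KK * t^4 + KK * t^2 + KK"
    using a unfolding KK_def by (simp_all add: algebra_simps)
qed

lemma rec_Z:
  "(\<integral>\<^sup>+\<omega>. ennreal (Zq \<omega> (c # v) ^ 2) \<partial>Omega) \<le> (\<integral>\<^sup>+\<omega>. ennreal (Zq \<omega> v ^ 2) \<partial>Omega) + ennreal KK"
  "(\<integral>\<^sup>+\<omega>. ennreal (Zq \<omega> (c # v) ^ 4) \<partial>Omega) \<le> (\<integral>\<^sup>+\<omega>. ennreal (Zq \<omega> v ^ 4) \<partial>Omega) + ennreal KK * (\<integral>\<^sup>+\<omega>. ennreal (Zq \<omega> v ^ 2) \<partial>Omega) + ennreal KK"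
  "(\<integral>\<^sup>+\<omega>. ennreal (Zq \<omega> (c # v) ^ 6) \<partial>Omega) \<le> (\<integral>\<^sup>+\<omega>. ennreal (Zq \<omega> v ^ 6) \<partial>Omega) + ennreal KK * (\<integral>\<^sup>+\<omega>. ennreal (Zq \<omega> v ^ 4) \<partial>Omega) + ennreal KK * (\<integral>\<^sup>+\<omega>. ennreal (Zq \<omega> v ^ 2) \<partial>Omega) + ennreal KK"
proof -
  have s1: "(\<integral>\<^sup>+\<omega>. ennreal (Zq \<omega> (c # v) ^ (2*1)) \<partial>Omega) \<le> (\<integral>\<^sup>+\<omega>. ennreal (Zq \<omega> v ^ (2*1) + (\<lambda>z. 1) (Zq \<omega> v) * 100721) \<partial>Omega)"
    by (rule Z_step) (use poly_Z2 in auto)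
  have s2: "(\<integral>\<^sup>+\<omega>. ennreal (Zq \<omega> (c # v) ^ (2*2)) \<partial>Omega) \<le> (\<integral>\<^sup>+\<omega>. ennreal (Zq \<omega> v ^ (2*2) + (\<lambda>z. 6 * z^2 + 1) (Zq \<omega> v) * 100721) \<partial>Omega)"
    by (rule Z_step) (use poly_Z4 in auto)
  have s3: "(\<integral>\<^sup>+\<omega>. ennreal (Zq \<omega> (c # v) ^ (2*3)) \<partial>Omega) \<le> (\<integral>\<^sup>+\<omega>. ennreal (Zq \<omega> v ^ (2*3) + (\<lambda>z. 15 * z^4 + 15 * z^2 + 1) (Zq \<omega> v) * 100721) \<partial>Omega)"
    by (rule Z_step) (use poly_Z6 in auto)
  have "(\<integral>\<^sup>+\<omega>. ennreal (Zq \<omega> (c # v) ^ 2) \<partial>Omega) \<le> (\<integral>\<^sup>+\<omega>. ennreal (Zq \<omega> v ^ 2 + KK) \<partial>Omega)"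
    using s1 by (simp add: order_trans[OF _ nn_integral_mono[OF ennreal_leI[OF bnd(1)]]])
  then show "(\<integral>\<^sup>+\<omega>. ennreal (Zq \<omega> (c # v) ^ 2) \<partial>Omega) \<le> (\<integral>\<^sup>+\<omega>. ennreal (Zq \<omega> v ^ 2) \<partial>Omega) + ennreal KK"
    by (simp add: split_int)
  have "(\<integral>\<^sup>+\<omega>. ennreal (Zq \<omega> (c # v) ^ 4) \<partial>Omega) \<le> (\<integral>\<^sup>+\<omega>. ennreal (Zq \<omega> v ^ 4 + KK * Zq \<omega> v ^ 2 + KK) \<partial>Omega)"
    using s2 by (simp add: order_trans[OF _ nn_integral_mono[OF ennreal_leI[OF bnd(2)]]])
  then show "(\<integral>\<^sup>+\<omega>. ennreal (Zq \<omega> (c # v) ^ 4) \<partial>Omega) \<le> (\<integral>\<^sup>+\<omega>. ennreal (Zq \<omega> v ^ 4) \<partial>Omega) + ennreal KK * (\<integral>\<^sup>+\<omega>. ennreal (Zq \<omega> v ^ 2) \<partial>Omega) + ennreal KK"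
    by (simp add: split_int)
  have "(\<integral>\<^sup>+\<omega>. ennreal (Zq \<omega> (c # v) ^ 6) \<partial>Omega) \<le> (\<integral>\<^sup>+\<omega>. ennreal (Zq \<omega> v ^ 6 + KK * Zq \<omega> v ^ 4 + KK * Zq \<omega> v ^ 2 + KK) \<partial>Omega)"
    using s3 by (simp add: order_trans[OF _ nn_integral_mono[OF ennreal_leI[OF bnd(4)]]])
  then show "(\<integral>\<^sup>+\<omega>. ennreal (Zq \<omega> (c # v) ^ 6) \<partial>Omega) \<le> (\<integral>\<^sup>+\<omega>. ennreal (Zq \<omega> v ^ 6) \<partial>Omega) + ennreal KK * (\<integral>\<^sup>+\<omega>. ennreal (Zq \<omega> v ^ 4) \<partial>Omega) + ennreal KK * (\<integral>\<^sup>+\<omega>. ennreal (Zq \<omega> v ^ 2) \<partial>Omega) + ennreal KK"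
    by (simp add: split_int)
qed


lemma rec_S:
  "(\<integral>\<^sup>+\<omega>. ennreal (Sq \<omega> (c # v) ^ 2) \<partial>Omega) \<le> (\<integral>\<^sup>+\<omega>. ennreal (Sq \<omega> v ^ 2) \<partial>Omega) + ennreal KK"
  "(\<integral>\<^sup>+\<omega>. ennreal (Sq \<omega> (c # v) ^ 4) \<partial>Omega) \<le> (\<integral>\<^sup>+\<omega>. ennreal (Sq \<omega> v ^ 4) \<partial>Omega) + ennreal KK * (\<integral>\<^sup>+\<omega>. ennreal (Sq \<omega> v ^ 2) \<partial>Omega) + ennreal KK"
  "(\<integral>\<^sup>+\<omega>. ennreal (Sq \<omega> (c # v) ^ 6) \<partial>Omega) \<le> (\<integral>\<^sup>+\<omega>. ennreal (Sq \<omega> v ^ 6) \<partial>Omega) + ennreal KK * (\<integral>\<^sup>+\<omega>. ennreal (Sq \<omega> v ^ 4) \<partial>Omega) + ennreal KK * (\<integral>\<^sup>+\<omega>. ennreal (Sq \<omega> v ^ 2) \<partial>Omega) + ennreal KK"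
proof -
  have s1: "(\<integral>\<^sup>+\<omega>. ennreal (Sq \<omega> (c # v) ^ (2*1)) \<partial>Omega) \<le> (\<integral>\<^sup>+\<omega>. ennreal (Sq \<omega> v ^ (2*1) + (\<lambda>z. 1) (Sq \<omega> v) * 100721) \<partial>Omega)"
    by (rule S_step[where A="\<lambda>w. 2 * w"]) (use poly_S2 in auto)
  have s2: "(\<integral>\<^sup>+\<omega>. ennreal (Sq \<omega> (c # v) ^ (2*2)) \<partial>Omega) \<le> (\<integral>\<^sup>+\<omega>. ennreal (Sq \<omega> v ^ (2*2) + (\<lambda>z. 8 * z^2 + 3) (Sq \<omega> v) * 100721) \<partial>Omega)"
    by (rule S_step[where A="\<lambda>w. 4 * w^3"]) (use poly_S4 in auto)
  have s3: "(\<integral>\<^sup>+\<omega>. ennreal (Sq \<omega> (c # v) ^ (2*3)) \<partial>Omega) \<le> (\<integral>\<^sup>+\<omega>. ennreal (Sq \<omega> v ^ (2*3) + (\<lambda>z. 25 * z^4 + 28 * z^2 + 4) (Sq \<omega> v) * 100721) \<partial>Omega)"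
    by (rule S_step[where A="\<lambda>w. 6 * w^5"]) (use poly_S6 in auto)
  have "(\<integral>\<^sup>+\<omega>. ennreal (Sq \<omega> (c # v) ^ 2) \<partial>Omega) \<le> (\<integral>\<^sup>+\<omega>. ennreal (Sq \<omega> v ^ 2 + KK) \<partial>Omega)"
    using s1 by (simp add: order_trans[OF _ nn_integral_mono[OF ennreal_leI[OF bnd(1)]]])
  then show "(\<integral>\<^sup>+\<omega>. ennreal (Sq \<omega> (c # v) ^ 2) \<partial>Omega) \<le> (\<integral>\<^sup>+\<omega>. ennreal (Sq \<omega> v ^ 2) \<partial>Omega) + ennreal KK"
    by (simp add: split_int)
  have "(\<integral>\<^sup>+\<omega>. ennreal (Sq \<omega> (c # v) ^ 4) \<partial>Omega) \<le> (\<integral>\<^sup>+\<omega>. ennreal (Sq \<omega> v ^ 4 + KK * Sq \<omega> v ^ 2 + KK) \<partial>Omega)"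
    using s2 by (simp add: order_trans[OF _ nn_integral_mono[OF ennreal_leI[OF bnd(3)]]])
  then show "(\<integral>\<^sup>+\<omega>. ennreal (Sq \<omega> (c # v) ^ 4) \<partial>Omega) \<le> (\<integral>\<^sup>+\<omega>. ennreal (Sq \<omega> v ^ 4) \<partial>Omega) + ennreal KK * (\<integral>\<^sup>+\<omega>. ennreal (Sq \<omega> v ^ 2) \<partial>Omega) + ennreal KK"
    by (simp add: split_int)
  have "(\<integral>\<^sup>+\<omega>. ennreal (Sq \<omega> (c # v) ^ 6) \<partial>Omega) \<le> (\<integral>\<^sup>+\<omega>. ennreal (Sq \<omega> v ^ 6 + KK * Sq \<omega> v ^ 4 + KK * Sq \<omega> v ^ 2 + KK) \<partial>Omega)"
    using s3 by (simp add: order_trans[OF _ nn_integral_mono[OF ennreal_leI[OF bnd(5)]]])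
  then show "(\<integral>\<^sup>+\<omega>. ennreal (Sq \<omega> (c # v) ^ 6) \<partial>Omega) \<le> (\<integral>\<^sup>+\<omega>. ennreal (Sq \<omega> v ^ 6) \<partial>Omega) + ennreal KK * (\<integral>\<^sup>+\<omega>. ennreal (Sq \<omega> v ^ 4) \<partial>Omega) + ennreal KK * (\<integral>\<^sup>+\<omega>. ennreal (Sq \<omega> v ^ 2) \<partial>Omega) + ennreal KK"
    by (simp add: split_int)
qed


lemma rec_final:
  fixes f2 f4 f6 :: "bool list \<Rightarrow> ennreal" and K :: real
  assumes K: "1 \<le> K"
  assumes b: "f2 [] = 0" "f4 [] = 0" "f6 [] = 0"
  assumes s2: "\<And>c v. f2 (c # v) \<le> f2 v + ennreal K"
  assumes s4: "\<And>c v. f4 (c # v) \<le> f4 v + ennreal K * f2 v + ennreal K"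
  assumes s6: "\<And>c v. f6 (c # v) \<le> f6 v + ennreal K * f4 v + ennreal K * f2 v + ennreal K"
  shows "f2 v \<le> ennreal (K * real (length v)) \<and> f4 v \<le> ennreal (K^2 * real (length v)^2) \<and> f6 v \<le> ennreal (K^3 * real (length v)^3)"
proof (induction v)
  case Nil then show ?case using b by simp
next
  case (Cons c v)
  define n where "n = real (length v)"
  have n0: "0 \<le> n" unfolding n_def by simp
  have K0: "0 \<le> K" using K by simp
  have IH: "f2 v \<le> ennreal (K * n)" "f4 v \<le> ennreal (K^2 * n^2)" "f6 v \<le> ennreal (K^3 * n^3)"
    using Cons unfolding n_def by auto
  have len: "real (length (c # v)) = n + 1" unfolding n_def by simp
  have m: "ennreal K * ennreal a = ennreal (K * a)" for a using K0 by (simp add: ennreal_mult')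
  have KK2: "K \<le> K^2"
  proof -
    have "K * 1 \<le> K * K" by (rule mult_left_mono) (use K in auto)
    then show ?thesis by (simp add: power2_eq_square)
  qed
  have KK3': "K^2 \<le> K^3"
  proof -
    have "K^2 * 1 \<le> K^2 * K" by (rule mult_left_mono) (use K in auto)
    then show ?thesis by (simp add: power3_eq_cube power2_eq_square)
  qed
  have KK3: "K \<le> K^3" "K^2 \<le> K^3" using KK2 KK3' by auto
  have "f2 (c # v) \<le> ennreal (K * n) + ennreal K" using s2[of c v] IH(1) by (meson add_right_mono order_trans)
  also have "\<dots> = ennreal (K * (n + 1))" using K0 n0 by (simp add: ennreal_plus[symmetric] algebra_simps del: ennreal_plus)
  finally have r2: "f2 (c # v) \<le> ennreal (K * (n + 1))" .
  have "f4 (c # v) \<le> ennreal (K^2 * n^2) + ennreal K * ennreal (K * n) + ennreal K"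
    using s4[of c v] IH by (meson add_mono mult_left_mono order_trans order_refl zero_le)
  also have "\<dots> = ennreal (K^2 * n^2 + K * (K * n) + K)"
    using K0 n0 by (simp add: m ennreal_plus[symmetric] del: ennreal_plus)
  also have "\<dots> \<le> ennreal (K^2 * (n + 1)^2)"
  proof (rule ennreal_leI)
    have "K * (K * n) \<le> K^2 * (2 * n)" using K0 n0 by (simp add: power2_eq_square)
    then show "K^2 * n^2 + K * (K * n) + K \<le> K^2 * (n + 1)^2" using KK2 by (simp add: power2_eq_square algebra_simps)
  qed
  finally have r4: "f4 (c # v) \<le> ennreal (K^2 * (n + 1)^2)" .
  have "f6 (c # v) \<le> ennreal (K^3 * n^3) + ennreal K * ennreal (K^2 * n^2) + ennreal K * ennreal (K * n) + ennreal K"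
    using s6[of c v] IH by (meson add_mono mult_left_mono order_trans order_refl zero_le)
  also have "\<dots> = ennreal (K^3 * n^3 + K * (K^2 * n^2) + K * (K * n) + K)"
    using K0 n0 by (simp add: m ennreal_plus[symmetric] del: ennreal_plus)
  also have "\<dots> \<le> ennreal (K^3 * (n + 1)^3)"
  proof (rule ennreal_leI)
    have a: "K * (K^2 * n^2) \<le> K^3 * (3 * n^2)" using K0 n0 by (simp add: power3_eq_cube power2_eq_square)
    have b: "K * (K * n) \<le> K^3 * (3 * n)"
    proof -
      have "K * (K * n) = K^2 * n" by (simp add: power2_eq_square)
      also have "\<dots> \<le> K^3 * n" by (rule mult_right_mono[OF KK3(2) n0])
      also have "\<dots> \<le> K^3 * (3 * n)" using K0 n0 by (intro mult_left_mono) auto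
      finally show ?thesis .
    qed
    have e: "K^3 * (n + 1)^3 = K^3 * n^3 + K^3 * (3 * n^2) + K^3 * (3 * n) + K^3"
      by (simp add: power3_eq_cube power2_eq_square algebra_simps)
    show "K^3 * n^3 + K * (K^2 * n^2) + K * (K * n) + K \<le> K^3 * (n + 1)^3" unfolding e using a b KK3 by linarith
  qed
  finally have r6: "f6 (c # v) \<le> ennreal (K^3 * (n + 1)^3)" .
  show ?case unfolding len using r2 r4 r6 by simp
qed

lemma Zq_Nil: "Zq \<omega> [] = 0" by (simp add: Zq_def Xv_def Yv_def)
lemma Sq_Nil: "Sq \<omega> [] = 0" by (simp add: Sq_def Xv_def Yv_def)

lemma main_Z: "(\<integral>\<^sup>+\<omega>. ennreal (Zq \<omega> v ^ 6) \<partial>Omega) \<le> ennreal (KK^3 * real (length v)^3)"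
  using rec_final[of KK "\<lambda>v. \<integral>\<^sup>+\<omega>. ennreal (Zq \<omega> v ^ 2) \<partial>Omega" "\<lambda>v. \<integral>\<^sup>+\<omega>. ennreal (Zq \<omega> v ^ 4) \<partial>Omega"
     "\<lambda>v. \<integral>\<^sup>+\<omega>. ennreal (Zq \<omega> v ^ 6) \<partial>Omega" v] rec_Z
  by (simp add: KK_def Zq_Nil)

lemma main_S: "(\<integral>\<^sup>+\<omega>. ennreal (Sq \<omega> v ^ 6) \<partial>Omega) \<le> ennreal (KK^3 * real (length v)^3)"
  using rec_final[of KK "\<lambda>v. \<integral>\<^sup>+\<omega>. ennreal (Sq \<omega> v ^ 2) \<partial>Omega" "\<lambda>v. \<integral>\<^sup>+\<omega>. ennreal (Sq \<omega> v ^ 4) \<partial>Omega"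
     "\<lambda>v. \<integral>\<^sup>+\<omega>. ennreal (Sq \<omega> v ^ 6) \<partial>Omega" v] rec_S
  by (simp add: KK_def Sq_Nil)

theorem lemma5p1:
  "\<exists>C::real. \<forall>k::nat. \<forall>v::bool list. \<forall>j::nat. length v = k \<longrightarrow> j \<le> k \<longrightarrow>
     (\<integral>\<^sup>+ \<omega>. ennreal ((Xanc \<omega> v j - Yanc \<omega> v j) ^ 6) \<partial>Omega) \<le> ennreal (C * real j ^ 3) \<and>
     (\<integral>\<^sup>+ \<omega>. ennreal ((Xanc \<omega> v j + Yanc \<omega> v j - real j) ^ 6) \<partial>Omega) \<le> ennreal (C * real j ^ 3)"
proof (rule exI[where x="KK^3"], intro allI impI conjI)
  fix k :: nat and v :: "bool list" and j :: nat
  assume "length v = k" "j \<le> k"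
  define u where "u = drop (length v - j) v"
  have lu: "length u = j" unfolding u_def using \<open>length v = k\<close> \<open>j \<le> k\<close> by simp
  have "(\<integral>\<^sup>+ \<omega>. ennreal ((Xanc \<omega> v j - Yanc \<omega> v j) ^ 6) \<partial>Omega) = (\<integral>\<^sup>+\<omega>. ennreal (Zq \<omega> u ^ 6) \<partial>Omega)"
    unfolding Xanc_def Yanc_def Zq_def u_def ..
  also have "\<dots> \<le> ennreal (KK^3 * real j ^ 3)" using main_Z[of u] lu by simp
  finally show "(\<integral>\<^sup>+ \<omega>. ennreal ((Xanc \<omega> v j - Yanc \<omega> v j) ^ 6) \<partial>Omega) \<le> ennreal (KK^3 * real j ^ 3)" .
next
  fix k :: nat and v :: "bool list" and j :: nat
  assume "length v = k" "j \<le> k"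
  define u where "u = drop (length v - j) v"
  have lu: "length u = j" unfolding u_def using \<open>length v = k\<close> \<open>j \<le> k\<close> by simp
  have "(\<integral>\<^sup>+ \<omega>. ennreal ((Xanc \<omega> v j + Yanc \<omega> v j - real j) ^ 6) \<partial>Omega) = (\<integral>\<^sup>+\<omega>. ennreal (Sq \<omega> u ^ 6) \<partial>Omega)"
    unfolding Xanc_def Yanc_def Sq_def u_def[symmetric] lu ..
  also have "\<dots> \<le> ennreal (KK^3 * real j ^ 3)" using main_S[of u] lu by simp
  finally show "(\<integral>\<^sup>+ \<omega>. ennreal ((Xanc \<omega> v j + Yanc \<omega> v j - real j) ^ 6) \<partial>Omega) \<le> ennreal (KK^3 * real j ^ 3)" .
qed


end
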